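(* Let $\nu$ be an ergodic $S$-invariant probability measure on $X_\eta$ different from the Dirac measure at the all-zero sequence. Then for each $k\ge1$ there exists $b'_k$ with $1<b'_k$ and $b'_k\mid b_k$ such that all $b'_k$-th roots of unity are eigenvalues of $(S,X_\eta,\nu)$. In particular the system $(S,X_\eta,\nu)$ has infinite rational discrete spectrum.
   Context: Let $S$ be the shift on $\{0,1\}^{\mathbb Z}$, $(Sx)(n)=x(n+1)$. Let $\mathscr{B}=\{b_1,b_2,\dots\}\subset\{2,3,\dots\}$ with $\gcd(b_i,b_j)=1$ for $i\ne j$ and $\sum_i1/b_i<\infty$. Define $\eta(n)=1$ iff $b_i\nmid n$ for all $i$ (else $0$), and let $X_\eta$ be the set of $y\in\{0,1\}^{\mathbb Z}$ all of whose finite blocks occur in $\eta$; equivalently $y\in X_\eta$ iff $|\mathrm{supp}(y)\bmod b_i|<b_i$ for all $i$, with $\mathrm{supp}(y)=\{n:y(n)=1\}$. An eigenvalue of $(S,X_\eta,\nu)$ is $\lambda\in\mathbb C$ such that $f\circ S=\lambda f$ for some nonzero $f\in L^2(\nu)$. *)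

theory Defs
  imports "HOL-Probability.Probability"
begin

text \<open>Points of the full shift: functions int \<Rightarrow> bool (True = symbol 1).\<close>

definition shift :: "(int \<Rightarrow> bool) \<Rightarrow> (int \<Rightarrow> bool)" where
  "shift x = (\<lambda>n. x (n + 1))"

definition full_shift_space :: "(int \<Rightarrow> bool) measure" where
  "full_shift_space = Pi\<^sub>M UNIV (\<lambda>_. count_space UNIV)"

definition eta :: "(nat \<Rightarrow> nat) \<Rightarrow> int \<Rightarrow> bool" where
  "eta b n = (\<forall>i. \<not> int (b i) dvd n)"

definition Xeta :: "(nat \<Rightarrow> nat) \<Rightarrow> (int \<Rightarrow> bool) set" where
  "Xeta b = {y. \<forall>m (l::nat). \<exists>t. \<forall>j<l. y (m + int j) = eta b (t + int j)}"

definition shift_invariant :: "(int \<Rightarrow> bool) measure \<Rightarrow> bool" where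
  "shift_invariant \<nu> \<longleftrightarrow> shift \<in> \<nu> \<rightarrow>\<^sub>M \<nu> \<and> distr \<nu> \<nu> shift = \<nu>"

definition shift_ergodic :: "(int \<Rightarrow> bool) measure \<Rightarrow> bool" where
  "shift_ergodic \<nu> \<longleftrightarrow> (\<forall>A \<in> sets \<nu>. shift -` A \<inter> space \<nu> = A \<longrightarrow>
      measure \<nu> A = 0 \<or> measure \<nu> A = 1)"

definition is_eigenvalue :: "(int \<Rightarrow> bool) measure \<Rightarrow> complex \<Rightarrow> bool" where
  "is_eigenvalue \<nu> c \<longleftrightarrow> (\<exists>f :: (int \<Rightarrow> bool) \<Rightarrow> complex.
      f \<in> borel_measurable \<nu> \<and> integrable \<nu> (\<lambda>x. (norm (f x))\<^sup>2) \<and>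
      \<not> (AE x in \<nu>. f x = 0) \<and> (AE x in \<nu>. f (shift x) = c * f x))"

end

theory Submission
  imports Defs
begin


definition Ms :: "int \<Rightarrow> (int \<Rightarrow> bool) \<Rightarrow> int set" where
  "Ms B y = {r \<in> {0..<B}. \<forall>n. y n \<longrightarrow> n mod B \<noteq> r}"

lemma comp_meas:
  assumes "sets \<nu> = sets full_shift_space"
  shows "(\<lambda>y. y n) \<in> \<nu> \<rightarrow>\<^sub>M count_space UNIV"
  using measurable_component_singleton[of n UNIV "\<lambda>_. count_space UNIV"]
  unfolding full_shift_space_def
  by (subst measurable_cong_sets[OF assms refl]) (simp add: full_shift_space_def)

lemma space_nu: "sets \<nu> = sets full_shift_space \<Longrightarrow> space \<nu> = UNIV"
  by (drule sets_eq_imp_space_eq) (auto simp: full_shift_space_def space_PiM)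

lemma Ms_meas:
  assumes "sets \<nu> = sets full_shift_space"
  shows "{y \<in> space \<nu>. Ms B y = X} \<in> sets \<nu>"
proof -
  note [measurable] = comp_meas[OF assms]
  have "{y \<in> space \<nu>. Ms B y = X} = {y \<in> space \<nu>. X \<subseteq> {0..<B} \<and> (\<forall>r\<in>{0..<B}. (r \<in> X \<longleftrightarrow> (\<forall>n. y n \<longrightarrow> n mod B \<noteq> r)))}"
    unfolding Ms_def by auto
  also have "\<dots> \<in> sets \<nu>" by measurable
  finally show ?thesis .
qed

definition Rt :: "int \<Rightarrow> int \<Rightarrow> int set \<Rightarrow> int set" where
  "Rt B i X = {r \<in> {0..<B}. (r + i) mod B \<in> X}"

lemma Ms_sub: "Ms B y \<subseteq> {0..<B}" by (auto simp: Ms_def)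

lemma Ms_shift: assumes "B > 0" shows "Ms B (shift y) = Rt B 1 (Ms B y)"
proof -
  have key: "(n mod B \<noteq> r) \<longleftrightarrow> ((n+1) mod B \<noteq> (r+1) mod B)" if "0 \<le> r" "r < B" for n r
  proof -
    have "n mod B = r \<longleftrightarrow> n mod B = r mod B" using that by simp
    also have "\<dots> \<longleftrightarrow> (n+1) mod B = (r+1) mod B" by (simp add: mod_eq_dvd_iff)
    finally show ?thesis by simp
  qed
  have a: "(\<forall>n. y (n+1) \<longrightarrow> n mod B \<noteq> r) \<longleftrightarrow> (\<forall>n. y n \<longrightarrow> n mod B \<noteq> (r+1) mod B)"
    if "0 \<le> r" "r < B" for r
  proof
    assume h: "\<forall>n. y (n+1) \<longrightarrow> n mod B \<noteq> r"
    show "\<forall>n. y n \<longrightarrow> n mod B \<noteq> (r+1) mod B"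
    proof (intro allI impI)
      fix n assume "y n"
      hence "(n - 1) mod B \<noteq> r" using h[rule_format, of "n-1"] by simp
      thus "n mod B \<noteq> (r+1) mod B" using key[OF that, of "n-1"] by simp
    qed
  next
    assume h: "\<forall>n. y n \<longrightarrow> n mod B \<noteq> (r+1) mod B"
    show "\<forall>n. y (n+1) \<longrightarrow> n mod B \<noteq> r"
      using h key[OF that] by blast
  qed
  have b: "(r+1) mod B \<in> Ms B y \<longleftrightarrow> (\<forall>n. y n \<longrightarrow> n mod B \<noteq> (r+1) mod B)" for r
    using assms by (simp add: Ms_def)
  show ?thesis unfolding Rt_def
    using a b by (auto simp: Ms_def shift_def)
qed

lemma Rt_sub: "Rt B i X \<subseteq> {0..<B}" by (auto simp: Rt_def)

lemma Rt_Rt: assumes "B > 0" shows "Rt B i (Rt B j X) = Rt B (i + j) X"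
  using assms by (auto simp: Rt_def mod_add_left_eq add.assoc)

lemma Rt_0: "X \<subseteq> {0..<B} \<Longrightarrow> Rt B 0 X = X"
  by (auto simp: Rt_def)

lemma Rt_mod: "Rt B (i mod B) X = Rt B i X"
  by (simp add: Rt_def mod_add_right_eq)

lemma Rt_inj: assumes "B > 0" "X \<subseteq> {0..<B}" "Y \<subseteq> {0..<B}" "Rt B i X = Rt B i Y"
  shows "X = Y"
proof -
  have "Rt B (-i) (Rt B i X) = Rt B (-i) (Rt B i Y)" using assms by simp
  moreover have "Rt B (-i) (Rt B i X) = X" using Rt_Rt[OF assms(1), of "-i" i X] Rt_0[OF assms(2)] by simp
  moreover have "Rt B (-i) (Rt B i Y) = Y" using Rt_Rt[OF assms(1), of "-i" i Y] Rt_0[OF assms(3)] by simp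
  ultimately show ?thesis by simp
qed

lemma Ms_nonempty:
  assumes y: "y \<in> Xeta b" and B: "B = int (b k)" "b k \<ge> 2"
  shows "Ms B y \<noteq> {}"
proof
  assume e: "Ms B y = {}"
  have Bp: "B > 0" using B by simp
  have "\<forall>r\<in>{0..<B}. \<exists>n. y n \<and> n mod B = r" using e unfolding Ms_def by blast
  then obtain nf where nf: "\<And>r. r \<in> {0..<B} \<Longrightarrow> y (nf r) \<and> nf r mod B = r" by metis
  define N where "N = nf ` {0..<B}"
  have fin: "finite N" "N \<noteq> {}" using Bp by (auto simp: N_def)
  define m where "m = Min N"
  define l where "l = nat (Max N - m) + 1"
  obtain t where t: "\<And>j. j < l \<Longrightarrow> y (m + int j) = eta b (t + int j)"
    using y unfolding Xeta_def by blast
  define r where "r = (m - t) mod B"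
  have r: "r \<in> {0..<B}" using Bp by (simp add: r_def)
  define j where "j = nat (nf r - m)"
  have inN: "nf r \<in> N" using r by (simp add: N_def)
  have "m \<le> nf r" using fin inN by (simp add: m_def)
  moreover have "nf r \<le> Max N" using fin inN by simp
  ultimately have jl: "j < l" and jeq: "m + int j = nf r" by (auto simp: j_def l_def)
  have "eta b (t + int j)" using t[OF jl] jeq nf[OF r] by simp
  moreover have "B dvd (t + int j)"
  proof -
    have "(t + int j) mod B = (t + (nf r mod B) - m) mod B" using jeq
      by (metis add_diff_eq diff_add_eq mod_add_right_eq mod_diff_left_eq add_diff_cancel_left')
    also have "\<dots> = (t + r - m) mod B" using nf[OF r] by simp
    also have "\<dots> = (t + (m - t) - m) mod B" unfolding r_def
      by (metis add_diff_eq mod_add_right_eq mod_diff_left_eq)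
    finally show ?thesis by (simp add: dvd_eq_mod_eq_0)
  qed
  ultimately show False using B by (auto simp: eta_def)
qed

lemma Rt_mult: assumes "B > 0" "X \<subseteq> {0..<B}" "Rt B q X = X" shows "Rt B (q * c) X = X"
proof -
  have pos: "Rt B (q * int n) X = X" for n :: nat
  proof (induction n)
    case 0 thus ?case using assms Rt_0 by simp
  next
    case (Suc n)
    have "Rt B (q * int (Suc n)) X = Rt B q (Rt B (q * int n) X)"
      using Rt_Rt[OF assms(1)] by (simp add: algebra_simps)
    thus ?case using Suc assms by simp
  qed
  show ?thesis
  proof (cases "c \<ge> 0")
    case True thus ?thesis using pos[of "nat c"] by simp
  next
    case False
    have "Rt B (q * c) X = Rt B (q * c) (Rt B (q * (-c)) X)" using pos[of "nat (-c)"] False by simp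
    also have "\<dots> = X" using Rt_Rt[OF assms(1)] Rt_0[OF assms(2)] by (simp add: algebra_simps)
    finally show ?thesis .
  qed
qed

lemma pow_cong_eq:
  fixes z :: complex assumes "z ^ p = 1" "int p dvd (int a - int c)"
  shows "z ^ a = z ^ c"
proof -
  have "int a mod int p = int c mod int p" using assms(2) by (simp add: mod_eq_dvd_iff)
  hence m: "a mod p = c mod p" by (metis of_nat_eq_iff zmod_int)
  have "z ^ a = z ^ (p * (a div p) + a mod p)" by simp
  also have "\<dots> = z ^ (a mod p)" by (simp only: power_add power_mult assms(1)) simp
  also have "\<dots> = z ^ (p * (c div p) + c mod p)" by (simp only: m power_add power_mult assms(1)) simp
  also have "\<dots> = z ^ c" by simp
  finally show ?thesis .
qed


lemma per_k:
  assumes prob: "prob_space \<nu>"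
    and sets_nu: "sets \<nu> = sets full_shift_space"
    and Xm: "Xeta b \<in> sets \<nu>" and on_X: "emeasure \<nu> (Xeta b) = 1"
    and erg: "shift_ergodic \<nu>"
    and not_dirac: "\<nu> \<noteq> return full_shift_space (\<lambda>n. False)"
    and Bp: "B > 0"
    and ne: "\<And>y. y \<in> Xeta b \<Longrightarrow> Ms B y \<noteq> {}"
  shows "\<exists>p::nat. 1 < p \<and> int p dvd B \<and> (\<forall>z::complex. z ^ p = 1 \<longrightarrow> is_eigenvalue \<nu> z)"
proof -
  interpret prob_space \<nu> by (rule prob)
  have sp: "space \<nu> = UNIV" by (rule space_nu[OF sets_nu])
  have MsS: "\<And>X. {y. Ms B y = X} \<in> sets \<nu>" using Ms_meas[OF sets_nu] sp by simp
  obtain X where X: "X \<subseteq> {0..<B}" "prob {y. Ms B y = X} > 0"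
  proof -
    note th = that
    have cover: "space \<nu> = (\<Union>X\<in>Pow {0..<B}. {y. Ms B y = X})" using Ms_sub sp by blast
    have sub: "(\<lambda>X. {y. Ms B y = X}) ` Pow {0..<B} \<subseteq> sets \<nu>" using MsS by blast
    have "prob (space \<nu>) \<le> (\<Sum>X\<in>Pow {0..<B}. prob {y. Ms B y = X})"
      unfolding cover by (rule finite_measure_subadditive_finite[OF _ sub]) simp
    hence le: "1 \<le> (\<Sum>X\<in>Pow {0..<B}. prob {y. Ms B y = X})" using prob_space by simp
    show ?thesis
    proof (rule ccontr)
      assume "\<not> thesis"
      have "prob {y. Ms B y = X} = 0" if "X \<in> Pow {0..<B}" for X
      proof (rule ccontr)
        assume "prob {y. Ms B y = X} \<noteq> 0"
        hence "prob {y. Ms B y = X} > 0" using measure_nonneg[of \<nu> "{y. Ms B y = X}"] by linarith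
        thus False using th[of X] that \<open>\<not> thesis\<close> by blast
      qed
      hence "(\<Sum>X\<in>Pow {0..<B}. prob {y. Ms B y = X}) = 0" by simp
      thus False using le by simp
    qed
  qed
  define E where "E = {y. \<exists>i. Ms B y = Rt B i X}"
  have E_eq: "E = (\<Union>i\<in>{0..<B}. {y. Ms B y = Rt B i X})"
    unfolding E_def
  proof safe
    fix y i assume "Ms B y = Rt B i X"
    thus "y \<in> (\<Union>i\<in>{0..<B}. {y. Ms B y = Rt B i X})" using Rt_mod[of B i X] Bp by auto
  qed auto
  have Em: "E \<in> sets \<nu>" unfolding E_eq using MsS by auto
  have "{y. Ms B y = X} \<subseteq> E" unfolding E_def using Rt_0[OF X(1)] by (auto intro: exI[of _ 0])
  hence "prob {y. Ms B y = X} \<le> prob E" using finite_measure_mono[OF _ Em] by blast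
  hence Epos: "prob E > 0" using X(2) by linarith
  have Einv: "shift -` E \<inter> space \<nu> = E"
  proof -
    have "shift y \<in> E \<longleftrightarrow> y \<in> E" for y
    proof
      assume "shift y \<in> E"
      then obtain i where "Rt B 1 (Ms B y) = Rt B i X" unfolding E_def using Ms_shift[OF Bp] by auto
      also have "\<dots> = Rt B 1 (Rt B (i - 1) X)" using Rt_Rt[OF Bp] by simp
      finally have "Ms B y = Rt B (i - 1) X" using Rt_inj[OF Bp Ms_sub Rt_sub] by blast
      thus "y \<in> E" unfolding E_def by blast
    next
      assume "y \<in> E"
      then obtain i where "Ms B y = Rt B i X" unfolding E_def by auto
      hence "Ms B (shift y) = Rt B (1 + i) X" using Ms_shift[OF Bp] Rt_Rt[OF Bp] by simp
      thus "shift y \<in> E" unfolding E_def by blast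
    qed
    thus ?thesis using sp by auto
  qed
  have "prob E = 0 \<or> prob E = 1" using erg Em Einv unfolding shift_ergodic_def by blast
  hence E1: "prob E = 1" using Epos by auto
  have AE_E: "AE y in \<nu>. y \<in> E" using AE_prob_1[OF E1] .
  define p where "p = (LEAST p::nat. p > 0 \<and> Rt B (int p) X = X)"
  have ex: "nat B > 0 \<and> Rt B (int (nat B)) X = X" using Bp Rt_mod[of B B X] Rt_0[OF X(1)] by simp
  have pp: "p > 0 \<and> Rt B (int p) X = X" unfolding p_def by (rule LeastI[where P="\<lambda>p. p > 0 \<and> Rt B (int p) X = X", OF ex])
  hence p: "p > 0" "Rt B (int p) X = X" by auto
  have p_le: "\<And>q. q > 0 \<Longrightarrow> Rt B (int q) X = X \<Longrightarrow> p \<le> q"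
    unfolding p_def by (rule Least_le) simp
  have stab: "int p dvd i" if "Rt B i X = X" for i
  proof -
    define q where "q = i mod int p"
    have q: "0 \<le> q" "q < int p" using p(1) by (auto simp: q_def)
    have "Rt B q X = Rt B i (Rt B (int p * (- (i div int p))) X)"
      using Rt_Rt[OF Bp] by (simp add: q_def algebra_simps mod_div_decomp minus_div_mult_eq_mod[symmetric])
    also have "\<dots> = X" using Rt_mult[OF Bp X(1) p(2), of "- (i div int p)"] that by simp
    finally have "Rt B (int (nat q)) X = X" using q by simp
    hence "q = 0" using p_le[of "nat q"] q by (cases "q = 0") auto
    thus ?thesis by (simp add: q_def dvd_eq_mod_eq_0)
  qed
  have pB: "int p dvd B" using stab[of B] Rt_mod[of B B X] Rt_0[OF X(1)] by simp
  have p1: "p > 1"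
  proof (rule ccontr)
    assume "\<not> p > 1"
    hence "p = 1" using p(1) by simp
    hence allX: "Rt B i X = X" for i using Rt_mult[OF Bp X(1) p(2), of i] by simp
    hence EX: "E = {y. Ms B y = X}" unfolding E_def by auto
    show False
    proof (cases "X = {}")
      case True
      have "AE y in \<nu>. y \<in> Xeta b" using AE_prob_1[of "Xeta b"] on_X Xm
        by (simp add: emeasure_eq_measure)
      with AE_E have "AE y in \<nu>. False" by eventually_elim (use ne True EX in auto)
      thus False using AE_False prob_space by (simp add: emeasure_space_1)
    next
      case False
      then obtain r0 where r0: "r0 \<in> X" by auto
      have Xfull: "X = {0..<B}"
      proof
        show "{0..<B} \<subseteq> X"
        proof
          fix s assume s: "s \<in> {0..<B}"
          have "s \<in> Rt B (r0 - s) X" using r0 X(1) s by (auto simp: Rt_def)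
          thus "s \<in> X" using allX by simp
        qed
      qed (rule X(1))
      have Ez: "E \<subseteq> {\<lambda>n. False}"
      proof
        fix y assume "y \<in> E"
        hence Mf: "Ms B y = {0..<B}" using EX Xfull by simp
        have "\<not> y n" for n
        proof
          assume "y n"
          have "n mod B \<in> Ms B y" using Mf Bp by simp
          thus False using \<open>y n\<close> unfolding Ms_def by blast
        qed
        thus "y \<in> {\<lambda>n. False}" by auto
      qed
      have "\<nu> = return full_shift_space (\<lambda>n. False)"
      proof (rule measure_eqI)
        show "sets \<nu> = sets (return full_shift_space (\<lambda>n. False))" using sets_nu by simp
      next
        fix A assume A: "A \<in> sets \<nu>"
        have Af: "A \<in> sets full_shift_space" using A sets_nu by simp
        have "E \<noteq> {}" using Epos by auto
        hence E0: "E = {\<lambda>n. False}" using Ez by auto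
        show "emeasure \<nu> A = emeasure (return full_shift_space (\<lambda>n. False)) A"
        proof (cases "(\<lambda>n. False) \<in> A")
          case True
          hence "E \<subseteq> A" using E0 by auto
          hence "prob E \<le> prob A" using finite_measure_mono[OF _ A] by blast
          hence "prob A = 1" using E1 prob_le_1[of A] by linarith
          thus ?thesis using True Af by (simp add: emeasure_eq_measure)
        next
          case False
          hence "A \<inter> E = {}" using E0 by auto
          hence "prob (A \<union> E) = prob A + prob E" using finite_measure_Union[OF A Em] by blast
          moreover have "prob (A \<union> E) \<le> 1" by (rule prob_le_1)
          ultimately have "prob A = 0" using E1 measure_nonneg[of \<nu> A] by linarith
          thus ?thesis using False Af by (simp add: emeasure_eq_measure)
        qed
      qed
      thus False using not_dirac by simp
    qed
  qed
  have eig: "is_eigenvalue \<nu> z" if z: "z ^ p = 1" for z :: complex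
  proof -
    define g where "g S = (LEAST i::nat. S = Rt B (int i) X)" for S
    define f where "f y = z ^ g (Ms B y)" for y
    have gE: "Ms B y = Rt B (int (g (Ms B y))) X" if "y \<in> E" for y
    proof -
      obtain i where "Ms B y = Rt B i X" using \<open>y \<in> E\<close> unfolding E_def by auto
      hence "Ms B y = Rt B (int (nat (i mod B))) X" using Rt_mod[of B i X] Bp by simp
      thus ?thesis unfolding g_def by (rule LeastI)
    qed
    have nz: "norm z = 1" using power_eq_1_iff[OF z] p(1) by simp
    have nf: "norm (f y) = 1" for y by (simp add: f_def norm_power nz)
    have Msm: "Ms B \<in> \<nu> \<rightarrow>\<^sub>M count_space (Pow {0..<B})"
    proof (subst measurable_count_space_eq_countable)
      show "countable (Pow {0..<B})" by (rule countable_finite) simp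
      have "\<And>a. Ms B -` {a} \<inter> space \<nu> = {y. Ms B y = a}" using sp by auto
      thus "Ms B \<in> space \<nu> \<rightarrow> Pow {0..<B} \<and> (\<forall>a\<in>Pow {0..<B}. Ms B -` {a} \<inter> space \<nu> \<in> sets \<nu>)"
        using MsS Ms_sub by auto
    qed
    have fm: "f \<in> borel_measurable \<nu>"
      unfolding f_def using measurable_comp[OF Msm borel_measurable_count_space[of "\<lambda>S. z ^ g S"]]
      by (simp add: comp_def)
    have int: "integrable \<nu> (\<lambda>x. (norm (f x))\<^sup>2)" using nf by simp
    have nAE: "\<not> (AE x in \<nu>. f x = 0)"
    proof
      assume "AE x in \<nu>. f x = 0"
      moreover have "\<And>x. f x \<noteq> 0" using nf by (metis norm_zero zero_neq_one)
      ultimately have "AE x in \<nu>. False" by (auto elim: AE_mp)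
      thus False using AE_False prob_space by (simp add: emeasure_space_1)
    qed
    have "AE x in \<nu>. f (shift x) = z * f x"
      using AE_E
    proof eventually_elim
      case (elim y)
      have sy: "shift y \<in> E" using elim Einv by auto
      have "Rt B (int (g (Ms B (shift y)))) X = Ms B (shift y)" by (rule gE[OF sy, symmetric])
      also have "\<dots> = Rt B 1 (Ms B y)" by (rule Ms_shift[OF Bp])
      also have "\<dots> = Rt B 1 (Rt B (int (g (Ms B y))) X)" by (rule arg_cong[where f="Rt B 1", OF gE[OF elim]])
      also have "\<dots> = Rt B (1 + int (g (Ms B y))) X" by (rule Rt_Rt[OF Bp])
      finally have e: "Rt B (int (g (Ms B (shift y)))) X = Rt B (1 + int (g (Ms B y))) X" .
      have "Rt B (int (g (Ms B (shift y))) - (1 + int (g (Ms B y)))) X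
           = Rt B (- (1 + int (g (Ms B y)))) (Rt B (int (g (Ms B (shift y)))) X)"
        by (simp add: Rt_Rt[OF Bp] algebra_simps)
      also have "\<dots> = X" unfolding e using Rt_Rt[OF Bp] Rt_0[OF X(1)] by simp
      finally have "int p dvd (int (g (Ms B (shift y))) - int (Suc (g (Ms B y))))"
        using stab by simp
      hence "z ^ g (Ms B (shift y)) = z ^ Suc (g (Ms B y))" by (rule pow_cong_eq[OF z])
      thus ?case by (simp add: f_def)
    qed
    thus ?thesis unfolding is_eigenvalue_def using fm int nAE by blast
  qed
  show ?thesis using p1 pB eig by blast
qed

theorem mainTheorem8:
  fixes b :: "nat \<Rightarrow> nat" and \<nu> :: "(int \<Rightarrow> bool) measure"
  assumes b_ge2: "\<And>i. b i \<ge> 2"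
    and b_coprime: "\<And>i j. i \<noteq> j \<Longrightarrow> coprime (b i) (b j)"
    and b_summable: "summable (\<lambda>i. 1 / real (b i))"
    and prob: "prob_space \<nu>"
    and sets_nu: "sets \<nu> = sets full_shift_space"
    and on_X: "emeasure \<nu> (Xeta b) = 1"
    and inv: "shift_invariant \<nu>"
    and erg: "shift_ergodic \<nu>"
    and not_dirac: "\<nu> \<noteq> return full_shift_space (\<lambda>n. False)"
  shows "(\<forall>k. \<exists>b'. 1 < b' \<and> b' dvd b k \<and>
            (\<forall>z::complex. z ^ b' = 1 \<longrightarrow> is_eigenvalue \<nu> z))
         \<and> infinite {z::complex. is_eigenvalue \<nu> z \<and> (\<exists>n>0. z ^ n = 1)}"
proof -
  have Xm: "Xeta b \<in> sets \<nu>"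
  proof (rule ccontr)
    assume "Xeta b \<notin> sets \<nu>"
    hence "emeasure \<nu> (Xeta b) = 0" by (rule emeasure_notin_sets)
    thus False using on_X by simp
  qed
  have ex: "\<exists>p. 1 < p \<and> p dvd b k \<and> (\<forall>z::complex. z ^ p = 1 \<longrightarrow> is_eigenvalue \<nu> z)" for k
  proof -
    have B: "int (b k) > 0" using b_ge2[of k] by simp
    have ne: "\<And>y. y \<in> Xeta b \<Longrightarrow> Ms (int (b k)) y \<noteq> {}"
      using Ms_nonempty b_ge2 by blast
    obtain p where "1 < p" "int p dvd int (b k)" "\<forall>z::complex. z ^ p = 1 \<longrightarrow> is_eigenvalue \<nu> z"
      using per_k[OF prob sets_nu Xm on_X erg not_dirac B ne] by blast
    thus ?thesis by (metis of_nat_dvd_iff)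
  qed
  then obtain pf where pf: "\<And>k. 1 < pf k" "\<And>k. pf k dvd b k"
    "\<And>k z. (z::complex) ^ pf k = 1 \<Longrightarrow> is_eigenvalue \<nu> z"
    by metis
  have inj: "inj pf"
  proof (rule injI)
    fix i j assume e: "pf i = pf j"
    show "i = j"
    proof (rule ccontr)
      assume "i \<noteq> j"
      hence c: "coprime (b i) (b j)" by (rule b_coprime)
      have "pf i dvd b i" "pf i dvd b j" using pf(2)[of i] pf(2)[of j] e by auto
      hence "pf i dvd 1" using c by (meson coprime_common_divisor)
      thus False using pf(1)[of i] by simp
    qed
  qed
  let ?S = "{z::complex. is_eigenvalue \<nu> z \<and> (\<exists>n>0. z ^ n = 1)}"
  have inf: "infinite ?S"
  proof
    assume fin: "finite ?S"
    have "pf k \<le> card ?S" for k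
    proof -
      have "{z::complex. z ^ pf k = 1} \<subseteq> ?S"
      proof
        fix z :: complex assume "z \<in> {z::complex. z ^ pf k = 1}"
        hence z: "z ^ pf k = 1" by simp
        have "pf k > 0" using pf(1)[of k] by simp
        thus "z \<in> ?S" using pf(3)[OF z] z by blast
      qed
      hence "card {z::complex. z ^ pf k = 1} \<le> card ?S" by (rule card_mono[OF fin])
      thus ?thesis using card_roots_unity_eq[of "pf k"] pf(1)[of k] by simp
    qed
    hence "range pf \<subseteq> {..card ?S}" by auto
    hence "finite (range pf)" using finite_subset by blast
    hence "finite (UNIV :: nat set)" using finite_imageD[OF _ inj] by blast
    thus False by simp
  qed
  show ?thesis using ex inf by blast
qed

end
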